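(* Let $\mathcal H$ be an infinite-dimensional separable Hilbert space with orthonormal basis $\{|\varphi_i\rangle\}_{i=1}^\infty$, and let $\big[\langle\varphi_i|\hat\varrho|\varphi_j\rangle\big]_{i,j=1}^{\infty}$ be an infinite complex matrix. This matrix represents a quantum state (i.e. is the matrix of a density operator in this basis) if and only if: (i) $\sum_{i,j=1}^{\infty}|\langle\varphi_i|\hat\varrho|\varphi_j\rangle|^2\le 1$; (ii) $\langle\varphi_i|\hat\varrho|\varphi_j\rangle=\overline{\langle\varphi_j|\hat\varrho|\varphi_i\rangle}$ for all $1\le i,j<\infty$; (iii) the series \[\big[\langle\varphi_i|\hat 1|\varphi_j\rangle\big]+\tfrac12\big[\langle\varphi_i|\hat\varrho-\hat1|\varphi_j\rangle\big]-\tfrac18\big[\langle\varphi_i|(\hat\varrho-\hat1)^2|\varphi_j\rangle\big]+\tfrac1{16}\big[\langle\varphi_i|(\hat\varrho-\hat1)^3|\varphi_j\rangle\big]+\dots+\frac{(-1)^{n+1}(2n-3)!!}{n!\,2^n}\big[\langle\varphi_i|(\hat\varrho-\hat1)^n|\varphi_j\rangle\big]+\dots\] is convergent in the (operator) norm to $\sqrt{\big[\langle\varphi_i|\hat\varrho|\varphi_j\rangle\big]}$; (iv) $\sum_{i=1}^{\infty}\langle\varphi_i|\hat\varrho|\varphi_i\rangle=1$.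
   Context: A density operator on $\mathcal H$ is an operator $\hat\varrho:\mathcal H\to\mathcal H$ defined on all of $\mathcal H$ which is positive, self-adjoint, and has trace $1$. When condition (i) holds, the matrix defines a unique Hilbert–Schmidt operator $\hat\varrho$ on $\mathcal H$ with the given matrix elements; powers refer to this operator, $\hat1$ is the identity, and all matrices are with respect to the basis $\{|\varphi_i\rangle\}$. *)

theory Defs
  imports "HOL-Analysis.Analysis"
begin

text \<open>The separable infinite-dimensional Hilbert space H is modelled concretely as
  l2(nat): square-summable sequences nat => complex, with orthonormal basis
  phi_i = basis_vec i (indices start at 0 instead of 1).  Operators are
  functions on sequences; only their behaviour on l2 matters.\<close>

type_synonym vec = "nat \<Rightarrow> complex"
type_synonym op = "vec \<Rightarrow> vec"

definition l2 :: "vec set" where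
  "l2 = {x. summable (\<lambda>i. (cmod (x i))\<^sup>2)}"

definition l2norm :: "vec \<Rightarrow> real" where
  "l2norm x = sqrt (\<Sum>i. (cmod (x i))\<^sup>2)"

definition l2inner :: "vec \<Rightarrow> vec \<Rightarrow> complex" where
  "l2inner x y = (\<Sum>i. cnj (x i) * y i)"

definition basis_vec :: "nat \<Rightarrow> vec" where
  "basis_vec j = (\<lambda>k. if k = j then 1 else 0)"

definition op_on_l2 :: "op \<Rightarrow> bool" where
  "op_on_l2 T \<longleftrightarrow> (\<forall>x\<in>l2. T x \<in> l2)
     \<and> (\<forall>x\<in>l2. \<forall>y\<in>l2. T (\<lambda>i. x i + y i) = (\<lambda>i. T x i + T y i))
     \<and> (\<forall>c. \<forall>x\<in>l2. T (\<lambda>i. c * x i) = (\<lambda>i. c * T x i))"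

definition self_adjoint_op :: "op \<Rightarrow> bool" where
  "self_adjoint_op T \<longleftrightarrow> (\<forall>x\<in>l2. \<forall>y\<in>l2. l2inner x (T y) = l2inner (T x) y)"

definition positive_op :: "op \<Rightarrow> bool" where
  "positive_op T \<longleftrightarrow> (\<forall>x\<in>l2. Im (l2inner x (T x)) = 0 \<and> 0 \<le> Re (l2inner x (T x)))"

definition density_op :: "op \<Rightarrow> bool" where
  "density_op T \<longleftrightarrow> op_on_l2 T \<and> positive_op T \<and> self_adjoint_op T
     \<and> (\<lambda>i. l2inner (basis_vec i) (T (basis_vec i))) sums 1"

definition represents_state :: "(nat \<Rightarrow> nat \<Rightarrow> complex) \<Rightarrow> bool" where
  "represents_state M \<longleftrightarrow> (\<exists>T. density_op T \<and>
     (\<forall>i j. l2inner (basis_vec i) (T (basis_vec j)) = M i j))"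

text \<open>The operator defined by the matrix M (well defined on l2 when M is Hilbert-Schmidt).\<close>
definition matop :: "(nat \<Rightarrow> nat \<Rightarrow> complex) \<Rightarrow> op" where
  "matop M x = (\<lambda>i. \<Sum>j. M i j * x j)"

text \<open>Double factorial, with 0!! = 1 (so that (2n-3)!! for n = 1, computed in nat, is (-1)!! = 1).\<close>
fun dfact :: "nat \<Rightarrow> nat" where
  "dfact 0 = 1"
| "dfact (Suc 0) = 1"
| "dfact (Suc (Suc n)) = Suc (Suc n) * dfact n"

definition sqrt_coeff :: "nat \<Rightarrow> real" where
  "sqrt_coeff n = (if n = 0 then 1 else
     (-1) ^ (n + 1) * real (dfact (2 * n - 3)) / (fact n * 2 ^ n))"

definition op_norm_tendsto :: "(nat \<Rightarrow> op) \<Rightarrow> op \<Rightarrow> bool" where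
  "op_norm_tendsto S L \<longleftrightarrow> (\<forall>\<epsilon>>0. \<exists>N. \<forall>n\<ge>N. \<forall>x\<in>l2.
       l2norm (\<lambda>i. S n x i - L x i) \<le> \<epsilon> * l2norm x)"

definition is_sqrt_op :: "op \<Rightarrow> op \<Rightarrow> bool" where
  "is_sqrt_op S T \<longleftrightarrow> op_on_l2 S \<and> positive_op S \<and> self_adjoint_op S
     \<and> (\<forall>x\<in>l2. S (S x) = T x)"

definition sqrt_partial :: "op \<Rightarrow> nat \<Rightarrow> op" where
  "sqrt_partial T N x = (\<lambda>i. \<Sum>n<N. complex_of_real (sqrt_coeff n) *
       (((\<lambda>y i. T y i - y i) ^^ n) x) i)"

end

theory Submission
  imports Defs "HOL-Computational_Algebra.Formal_Power_Series"
begin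

lemma dfact_odd: "dfact (2*m+1) = (2*m+1) * dfact (2*m-1)"
proof (cases m)
  case 0 then show ?thesis by simp
next
  case (Suc p)
  have "2*m+1 = Suc (Suc (2*p+1))" using Suc by simp
  moreover have "2*m-1 = 2*p+1" using Suc by simp
  ultimately show ?thesis by simp
qed

lemma sqrt_coeff_Suc:
  "sqrt_coeff (Suc k) = sqrt_coeff k * ((1/2 - real k) / real (Suc k))"
proof (cases k)
  case 0 then show ?thesis by (simp add: sqrt_coeff_def)
next
  case (Suc m)
  have e1: "2 * Suc (Suc m) - 3 = 2*m+1" by simp
  have e2: "2 * Suc m - 3 = 2*m - 1" by simp
  have d: "real (dfact (2*m+1)) = (2*real m+1) * real (dfact (2*m-1))"
    using dfact_odd[of m] by (simp del: dfact.simps add: algebra_simps)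
  show ?thesis
    unfolding Suc sqrt_coeff_def e1 e2 d
    by (simp add: field_simps)
qed

lemma sqrt_coeff_gchoose: "sqrt_coeff n = (1/2::real) gchoose n"
proof (induction n)
  case 0 then show ?case by (simp add: sqrt_coeff_def)
next
  case (Suc k)
  have "(1/2::real) * ((1/2) gchoose k) = real k * ((1/2) gchoose k) + real (Suc k) * ((1/2) gchoose (Suc k))"
    by (rule gbinomial_mult_1)
  then have "(1/2::real) gchoose (Suc k) = ((1/2) gchoose k) * ((1/2 - real k) / real (Suc k))"
    by (simp add: field_simps del: of_nat_Suc)
  then show ?case using Suc by (simp add: sqrt_coeff_Suc)
qed

lemma sqrt_coeff_conv:
  "(\<Sum>n\<in>{0..k}. sqrt_coeff n * sqrt_coeff (k - n)) = (if k \<le> 1 then 1 else 0)"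
proof -
  have "(\<Sum>n\<in>{0..k}. sqrt_coeff n * sqrt_coeff (k - n)) = (1/2 + 1/2::real) gchoose k"
    unfolding sqrt_coeff_gchoose by (rule gbinomial_Vandermonde)
  also have "\<dots> = real (1 choose k)"
    using binomial_gbinomial[of 1 k, where 'a=real] by simp
  also have "\<dots> = (if k \<le> 1 then 1 else 0)"
    by (cases k) (auto simp: binomial_eq_0)
  finally show ?thesis .
qed

lemma sqrt_coeff_sign: "n \<ge> 1 \<Longrightarrow> sqrt_coeff n * (-1)^n \<le> 0"
proof -
  assume "n \<ge> 1"
  have "sqrt_coeff n * (-1)^n = - (real (dfact (2 * n - 3)) / (fact n * 2 ^ n))"
    using \<open>n \<ge> 1\<close> by (simp add: sqrt_coeff_def power_add flip: power_mult_distrib)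
  also have "\<dots> \<le> 0" by simp
  finally show ?thesis .
qed

lemma sqrt_coeff_partial:
  "N \<ge> 1 \<Longrightarrow> (\<Sum>n<N. sqrt_coeff n * (-1)^n) = - 2 * real N * ((-1)^N * sqrt_coeff N)"
proof (induction N rule: dec_induct)
  case base then show ?case by (simp add: sqrt_coeff_def)
next
  case (step N)
  show ?case using step.IH by (simp add: sqrt_coeff_Suc field_simps)
qed

lemma sqrt_coeff_partial_nonneg: "0 \<le> (\<Sum>n<N. sqrt_coeff n * (-1)^n)"
proof (cases "N \<ge> 1")
  case True
  have "sqrt_coeff N * (-1)^N \<le> 0" using sqrt_coeff_sign True .
  then show ?thesis using sqrt_coeff_partial[OF True]
    by (simp add: mult_nonneg_nonpos mult.commute)
next
  case False then have "N = 0" by simp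
  then show ?thesis by simp
qed

lemma sqrt_coeff_abs: "n \<ge> 1 \<Longrightarrow> \<bar>sqrt_coeff n\<bar> = - (sqrt_coeff n * (-1)^n)"
proof -
  assume n: "n \<ge> 1"
  have "\<bar>sqrt_coeff n\<bar> = \<bar>sqrt_coeff n * (-1)^n\<bar>" by (simp add: abs_mult)
  then show ?thesis using sqrt_coeff_sign[OF n] by simp
qed

lemma sqrt_coeff_abs_partial: "(\<Sum>n<N. \<bar>sqrt_coeff n\<bar>) \<le> 2"
proof (cases N)
  case 0 then show ?thesis by simp
next
  case (Suc M)
  have "(\<Sum>n<Suc M. \<bar>sqrt_coeff n\<bar>) = 1 + (\<Sum>n<M. \<bar>sqrt_coeff (Suc n)\<bar>)"
    by (simp only: sum.lessThan_Suc_shift) (simp add: sqrt_coeff_def)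
  also have "\<dots> = 1 - (\<Sum>n<M. sqrt_coeff (Suc n) * (-1)^(Suc n))"
    by (simp add: sqrt_coeff_abs sum_negf del: power_Suc)
  also have "(\<Sum>n<Suc M. sqrt_coeff n * (-1)^n) = 1 + (\<Sum>n<M. sqrt_coeff (Suc n) * (-1)^(Suc n))"
    by (simp only: sum.lessThan_Suc_shift) (simp add: sqrt_coeff_def)
  hence "1 - (\<Sum>n<M. sqrt_coeff (Suc n) * (-1)^(Suc n)) \<le> 2"
    using sqrt_coeff_partial_nonneg[of "Suc M"] by linarith
  finally show ?thesis using Suc by simp
qed

lemma summable_sqrt_coeff: "summable (\<lambda>n. \<bar>sqrt_coeff n\<bar>)"
  by (rule summableI_nonneg_bounded[where x=2]) (auto intro: sqrt_coeff_abs_partial)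

lemma sqrt_coeff_pos_comb:
  assumes "b 0 = B" "\<And>n. 0 \<le> b n" "\<And>n. b n \<le> B"
  shows "0 \<le> (\<Sum>n<N. sqrt_coeff n * (-1)^n * b n)"
proof -
  have B: "0 \<le> B" using assms by force
  have "(\<Sum>n<N. sqrt_coeff n * (-1)^n * b n) - B * (\<Sum>n<N. sqrt_coeff n * (-1)^n)
      = (\<Sum>n<N. (sqrt_coeff n * (-1)^n) * (b n - B))"
    by (simp add: sum_distrib_left sum_subtractf algebra_simps)
  also have "\<dots> \<ge> 0"
  proof (rule sum_nonneg)
    fix n assume "n \<in> {..<N}"
    show "0 \<le> sqrt_coeff n * (-1)^n * (b n - B)"
    proof (cases "n = 0")
      case True then show ?thesis using assms by simp
    next
      case False
      then show ?thesis using sqrt_coeff_sign[of n] assms(3)[of n]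
        by (intro mult_nonpos_nonpos) auto
    qed
  qed
  finally show ?thesis using B sqrt_coeff_partial_nonneg[of N]
    by (smt (verit) mult_nonneg_nonneg)
qed


lemma l2D: "x \<in> l2 \<Longrightarrow> summable (\<lambda>i. (cmod (x i))\<^sup>2)"
  by (simp add: l2_def)

lemma l2I: "summable (\<lambda>i. (cmod (x i))\<^sup>2) \<Longrightarrow> x \<in> l2"
  by (simp add: l2_def)

lemma l2norm_nonneg: "x \<in> l2 \<Longrightarrow> 0 \<le> l2norm x"
  by (simp add: l2norm_def suminf_nonneg l2D)

lemma l2norm_sq: "x \<in> l2 \<Longrightarrow> (l2norm x)\<^sup>2 = (\<Sum>i. (cmod (x i))\<^sup>2)"
  unfolding l2norm_def by (intro real_sqrt_pow2 suminf_nonneg) (auto simp: l2D)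

lemma l2_add: assumes "x \<in> l2" "y \<in> l2" shows "(\<lambda>i. x i + y i) \<in> l2"
proof (rule l2I, rule summable_comparison_test[OF _ summable_add[OF summable_mult[OF l2D[OF assms(1)], of 2] summable_mult[OF l2D[OF assms(2)], of 2]]])
  show "\<exists>N. \<forall>n\<ge>N. norm ((cmod (x n + y n))\<^sup>2) \<le> 2 * (cmod (x n))\<^sup>2 + 2 * (cmod (y n))\<^sup>2"
  proof (intro exI allI impI)
    fix n
    have "cmod (x n + y n) \<le> cmod (x n) + cmod (y n)" by (rule norm_triangle_ineq)
    hence "(cmod (x n + y n))\<^sup>2 \<le> (cmod (x n) + cmod (y n))\<^sup>2" by (simp add: power_mono)
    also have "\<dots> \<le> 2 * (cmod (x n))\<^sup>2 + 2 * (cmod (y n))\<^sup>2"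
      using power2_sum[of "cmod (x n)" "cmod (y n)"] power2_diff[of "cmod (x n)" "cmod (y n)"]
        zero_le_power2[of "cmod (x n) - cmod (y n)"] by linarith
    finally show "norm ((cmod (x n + y n))\<^sup>2) \<le> 2 * (cmod (x n))\<^sup>2 + 2 * (cmod (y n))\<^sup>2" by simp
  qed
qed

lemma l2_scale: assumes "x \<in> l2" shows "(\<lambda>i. c * x i) \<in> l2"
proof (rule l2I)
  have "summable (\<lambda>i. (cmod c)\<^sup>2 * (cmod (x i))\<^sup>2)" using l2D[OF assms] by (rule summable_mult)
  then show "summable (\<lambda>i. (cmod (c * x i))\<^sup>2)" by (simp add: norm_mult power_mult_distrib)
qed

lemma l2_uminus: assumes "x \<in> l2" shows "(\<lambda>i. - x i) \<in> l2"
  using l2_scale[OF assms, of "-1"] by simp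

lemma l2_diff: assumes "x \<in> l2" "y \<in> l2" shows "(\<lambda>i. x i - y i) \<in> l2"
  using l2_add[OF assms(1) l2_uminus[OF assms(2)]] by simp

lemma l2_zero: "(\<lambda>i. 0) \<in> l2"
  by (rule l2I) simp

lemma l2_sum: "(\<And>n. n \<in> A \<Longrightarrow> f n \<in> l2) \<Longrightarrow> (\<lambda>i. \<Sum>n\<in>A. f n i) \<in> l2"
proof (induction A rule: infinite_finite_induct)
  case (infinite A) then show ?case by (simp add: l2_zero)
next
  case empty then show ?case by (simp add: l2_zero)
next
  case (insert a A)
  then show ?case using l2_add[of "f a" "\<lambda>i. \<Sum>n\<in>A. f n i"] by simp
qed

lemma basis_vec_l2: "basis_vec j \<in> l2"
proof (rule l2I)
  have "(\<lambda>i. (cmod (basis_vec j i))\<^sup>2) = (\<lambda>i. if i = j then 1 else 0)"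
    by (auto simp: basis_vec_def)
  then show "summable (\<lambda>i. (cmod (basis_vec j i))\<^sup>2)"
    using sums_single[of j "\<lambda>_. 1::real"] by (simp add: sums_summable)
qed

lemma inner_abs_summable:
  assumes "x \<in> l2" "y \<in> l2"
  shows "summable (\<lambda>i. cmod (cnj (x i) * y i))"
proof (rule summable_comparison_test[OF _ summable_add[OF l2D[OF assms(1)] l2D[OF assms(2)]]])
  show "\<exists>N. \<forall>n\<ge>N. norm (cmod (cnj (x n) * y n)) \<le> (cmod (x n))\<^sup>2 + (cmod (y n))\<^sup>2"
  proof (intro exI allI impI)
    fix n
    have "cmod (x n) * cmod (y n) \<le> (cmod (x n))\<^sup>2 + (cmod (y n))\<^sup>2"
      using power2_diff[of "cmod (x n)" "cmod (y n)"]
        zero_le_power2[of "cmod (x n) - cmod (y n)"] zero_le_power2[of "cmod (x n)"]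
        zero_le_power2[of "cmod (y n)"] by linarith
    then show "norm (cmod (cnj (x n) * y n)) \<le> (cmod (x n))\<^sup>2 + (cmod (y n))\<^sup>2"
      by (simp add: norm_mult)
  qed
qed

lemma inner_summable:
  assumes "x \<in> l2" "y \<in> l2"
  shows "summable (\<lambda>i. cnj (x i) * y i)"
  using summable_norm_cancel[OF inner_abs_summable[OF assms]] .

lemma l2inner_add_right:
  assumes "x \<in> l2" "y \<in> l2" "z \<in> l2"
  shows "l2inner x (\<lambda>i. y i + z i) = l2inner x y + l2inner x z"
  unfolding l2inner_def
  using suminf_add[OF inner_summable[OF assms(1,2)] inner_summable[OF assms(1,3)]]
  by (simp add: distrib_left)

lemma l2inner_scale_right:
  assumes "x \<in> l2" "y \<in> l2"
  shows "l2inner x (\<lambda>i. c * y i) = c * l2inner x y"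
  unfolding l2inner_def
  using suminf_mult[OF inner_summable[OF assms], of c]
  by (simp add: algebra_simps)

lemma l2inner_cnj:
  assumes "x \<in> l2" "y \<in> l2"
  shows "l2inner y x = cnj (l2inner x y)"
proof -
  have "(\<lambda>i. cnj (cnj (x i) * y i)) sums cnj (l2inner x y)"
    unfolding sums_cnj l2inner_def using inner_summable[OF assms] by (rule summable_sums)
  then show ?thesis unfolding l2inner_def by (simp add: sums_iff mult.commute)
qed

lemma l2inner_add_left:
  assumes "x \<in> l2" "y \<in> l2" "z \<in> l2"
  shows "l2inner (\<lambda>i. x i + y i) z = l2inner x z + l2inner y z"
  using l2inner_add_right[OF assms(3,1,2)] l2_add[OF assms(1,2)] assms
  by (simp add: l2inner_cnj[of z])

lemma l2inner_scale_left:
  assumes "x \<in> l2" "y \<in> l2"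
  shows "l2inner (\<lambda>i. c * x i) y = cnj c * l2inner x y"
  using l2inner_scale_right[OF assms(2,1), of c] l2_scale[OF assms(1), of c] assms
  by (simp add: l2inner_cnj[of y])

lemma l2inner_diff_right:
  assumes "x \<in> l2" "y \<in> l2" "z \<in> l2"
  shows "l2inner x (\<lambda>i. y i - z i) = l2inner x y - l2inner x z"
  using l2inner_add_right[OF assms(1,2) l2_uminus[OF assms(3)]]
    l2inner_scale_right[OF assms(1,3), of "-1"] by simp

lemma l2inner_diff_left:
  assumes "x \<in> l2" "y \<in> l2" "z \<in> l2"
  shows "l2inner (\<lambda>i. x i - y i) z = l2inner x z - l2inner y z"
  using l2inner_add_left[OF assms(1) l2_uminus[OF assms(2)] assms(3)]
    l2inner_scale_left[OF assms(2,3), of "-1"] by simp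

lemma l2inner_self:
  assumes "x \<in> l2"
  shows "l2inner x x = complex_of_real ((l2norm x)\<^sup>2)"
proof -
  have "(\<lambda>i. cnj (x i) * x i) = (\<lambda>i. complex_of_real ((cmod (x i))\<^sup>2))"
    by (auto simp: complex_mult_cnj cmod_def mult.commute)
  then have "l2inner x x = (\<Sum>i. complex_of_real ((cmod (x i))\<^sup>2))"
    by (simp only: l2inner_def)
  also have "\<dots> = complex_of_real (\<Sum>i. (cmod (x i))\<^sup>2)"
    by (rule suminf_of_real[OF l2D[OF assms], symmetric])
  finally show ?thesis by (simp only: l2norm_sq[OF assms])
qed

lemma L2_le_l2norm: assumes "x \<in> l2" "finite A" shows "L2_set (\<lambda>i. cmod (x i)) A \<le> l2norm x"
proof -
  have "(\<Sum>i\<in>A. (cmod (x i))\<^sup>2) \<le> (\<Sum>i. (cmod (x i))\<^sup>2)"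
    by (rule sum_le_suminf[OF l2D[OF assms(1)] assms(2)]) auto
  then show ?thesis unfolding L2_set_def l2norm_def by simp
qed

lemma l2_CS_abs:
  assumes "x \<in> l2" "y \<in> l2"
  shows "(\<Sum>i. cmod (cnj (x i) * y i)) \<le> l2norm x * l2norm y"
proof (rule suminf_le_const[OF inner_abs_summable[OF assms]])
  fix n
  have "(\<Sum>i<n. cmod (cnj (x i) * y i)) = (\<Sum>i<n. \<bar>cmod (x i)\<bar> * \<bar>cmod (y i)\<bar>)"
    by (simp add: norm_mult)
  also have "\<dots> \<le> L2_set (\<lambda>i. cmod (x i)) {..<n} * L2_set (\<lambda>i. cmod (y i)) {..<n}"
    by (rule L2_set_mult_ineq)
  also have "\<dots> \<le> l2norm x * l2norm y"
    by (intro mult_mono L2_le_l2norm assms l2norm_nonneg) (auto simp: L2_set_def sum_nonneg)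
  finally show "(\<Sum>i<n. cmod (cnj (x i) * y i)) \<le> l2norm x * l2norm y" .
qed

lemma l2_CS:
  assumes "x \<in> l2" "y \<in> l2"
  shows "cmod (l2inner x y) \<le> l2norm x * l2norm y"
  unfolding l2inner_def
  using summable_norm[OF inner_abs_summable[OF assms]] l2_CS_abs[OF assms] by linarith

lemma comp_le_l2norm:
  assumes "x \<in> l2" shows "cmod (x i) \<le> l2norm x"
  using L2_le_l2norm[OF assms, of "{i}"] by (simp add: L2_set_def)

lemma l2norm_diff_sq:
  assumes "x \<in> l2" "y \<in> l2"
  shows "(l2norm (\<lambda>i. x i - y i))\<^sup>2 = (l2norm x)\<^sup>2 - 2 * Re (l2inner x y) + (l2norm y)\<^sup>2"
proof -
  have d: "(\<lambda>i. x i - y i) \<in> l2" using assms by (rule l2_diff)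
  have "complex_of_real ((l2norm (\<lambda>i. x i - y i))\<^sup>2) = l2inner (\<lambda>i. x i - y i) (\<lambda>i. x i - y i)"
    using l2inner_self[OF d] by simp
  also have "\<dots> = l2inner x x - l2inner y x - (l2inner x y - l2inner y y)"
    by (simp add: l2inner_diff_left l2inner_diff_right assms d)
  also have "\<dots> = complex_of_real ((l2norm x)\<^sup>2 - 2 * Re (l2inner x y) + (l2norm y)\<^sup>2)"
    using assms by (simp add: l2inner_self l2inner_cnj[of x y] complex_eq_iff)
  finally show ?thesis by (simp only: of_real_eq_iff)
qed

lemma l2norm_add_sq:
  assumes "x \<in> l2" "y \<in> l2"
  shows "(l2norm (\<lambda>i. x i + y i))\<^sup>2 = (l2norm x)\<^sup>2 + 2 * Re (l2inner x y) + (l2norm y)\<^sup>2"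
  using l2norm_diff_sq[OF assms(1) l2_uminus[OF assms(2)]]
    l2inner_scale_right[OF assms, of "-1"] by (simp add: l2norm_def)

lemma l2norm_triangle:
  assumes "x \<in> l2" "y \<in> l2"
  shows "l2norm (\<lambda>i. x i + y i) \<le> l2norm x + l2norm y"
proof -
  have "Re (l2inner x y) \<le> l2norm x * l2norm y"
    using l2_CS[OF assms] complex_Re_le_cmod[of "l2inner x y"] by linarith
  hence "(l2norm (\<lambda>i. x i + y i))\<^sup>2 \<le> (l2norm x + l2norm y)\<^sup>2"
    by (simp add: l2norm_add_sq[OF assms] power2_sum)
  then show ?thesis
    by (rule power2_le_imp_le) (intro add_nonneg_nonneg l2norm_nonneg assms)
qed

lemma l2norm_scale:
  assumes "x \<in> l2" shows "l2norm (\<lambda>i. c * x i) = cmod c * l2norm x"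
proof -
  have "(\<Sum>i. (cmod (c * x i))\<^sup>2) = (cmod c)\<^sup>2 * (\<Sum>i. (cmod (x i))\<^sup>2)"
    by (simp add: norm_mult power_mult_distrib suminf_mult[OF l2D[OF assms]])
  then show ?thesis unfolding l2norm_def by (simp add: real_sqrt_mult)
qed

lemma l2norm_uminus: "l2norm (\<lambda>i. - x i) = l2norm x"
  by (simp add: l2norm_def)

lemma l2norm_diff_triangle:
  assumes "x \<in> l2" "y \<in> l2"
  shows "l2norm (\<lambda>i. x i - y i) \<le> l2norm x + l2norm y"
  using l2norm_triangle[OF assms(1) l2_uminus[OF assms(2)]] l2norm_uminus[of y] by simp

lemma basis_inner: "l2inner (basis_vec j) y = y j"
proof -
  have "(\<lambda>k. cnj (basis_vec j k) * y k) = (\<lambda>k. if k = j then y k else 0)"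
    by (auto simp: basis_vec_def)
  then show ?thesis unfolding l2inner_def using sums_single[of j y] by (simp add: sums_iff)
qed

lemma inner_basis: "y \<in> l2 \<Longrightarrow> l2inner y (basis_vec j) = cnj (y j)"
  using l2inner_cnj[OF _ basis_vec_l2, of y j] basis_inner[of j y] by simp

lemma l2norm_zero: "l2norm (\<lambda>i. 0) = 0"
  by (simp add: l2norm_def)


definition ser :: "(nat \<Rightarrow> vec) \<Rightarrow> vec" where
  "ser f = (\<lambda>i. \<Sum>n. f n i)"

lemma l2norm_sum:
  assumes "\<And>n. n \<in> F \<Longrightarrow> f n \<in> l2"
  shows "l2norm (\<lambda>i. \<Sum>n\<in>F. f n i) \<le> (\<Sum>n\<in>F. l2norm (f n))"
  using assms
proof (induction F rule: infinite_finite_induct)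
  case (infinite A) then show ?case by (simp add: l2norm_zero)
next
  case empty then show ?case by (simp add: l2norm_zero)
next
  case (insert a A)
  have "l2norm (\<lambda>i. \<Sum>n\<in>insert a A. f n i) = l2norm (\<lambda>i. f a i + (\<Sum>n\<in>A. f n i))"
    using insert by simp
  also have "\<dots> \<le> l2norm (f a) + l2norm (\<lambda>i. \<Sum>n\<in>A. f n i)"
    using insert by (intro l2norm_triangle l2_sum) auto
  also have "\<dots> \<le> l2norm (f a) + (\<Sum>n\<in>A. l2norm (f n))"
    using insert by simp
  finally show ?case using insert by simp
qed

lemma l2_partial_sq_le:
  assumes "x \<in> l2" shows "(\<Sum>i<K. (cmod (x i))\<^sup>2) \<le> (l2norm x)\<^sup>2"
  unfolding l2norm_sq[OF assms] by (rule sum_le_suminf[OF l2D[OF assms]]) auto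

lemma ser_comp_summable:
  assumes "\<And>n. f n \<in> l2" "summable (\<lambda>n. l2norm (f n))"
  shows "summable (\<lambda>n. norm (f n i))"
  by (rule summable_comparison_test[OF _ assms(2)]) (auto intro: comp_le_l2norm assms(1))

lemma ser_l2:
  assumes f: "\<And>n. f n \<in> l2" and s: "summable (\<lambda>n. l2norm (f n))"
  shows "ser f \<in> l2" "l2norm (ser f) \<le> (\<Sum>n. l2norm (f n))"
proof -
  define C where "C = (\<Sum>n. l2norm (f n))"
  have C0: "0 \<le> C" unfolding C_def by (intro suminf_nonneg s l2norm_nonneg f)
  have part: "(\<Sum>i<K. (cmod (ser f i))\<^sup>2) \<le> C\<^sup>2" for K
  proof (rule LIMSEQ_le_const2)
    show "(\<lambda>M. \<Sum>i<K. (cmod (\<Sum>n<M. f n i))\<^sup>2) \<longlonglongrightarrow> (\<Sum>i<K. (cmod (ser f i))\<^sup>2)"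
      unfolding ser_def
    proof (rule tendsto_sum)
      fix i
      have "(\<lambda>M. \<Sum>n<M. f n i) \<longlonglongrightarrow> (\<Sum>n. f n i)"
        by (rule summable_LIMSEQ, rule summable_norm_cancel, rule ser_comp_summable[OF f s])
      then show "(\<lambda>M. (cmod (\<Sum>n<M. f n i))\<^sup>2) \<longlonglongrightarrow> (cmod (\<Sum>n. f n i))\<^sup>2"
        by (intro tendsto_power tendsto_norm)
    qed
    show "\<exists>N. \<forall>M\<ge>N. (\<Sum>i<K. (cmod (\<Sum>n<M. f n i))\<^sup>2) \<le> C\<^sup>2"
    proof (intro exI allI impI)
      fix M :: nat
      have w: "(\<lambda>i. \<Sum>n<M. f n i) \<in> l2" by (intro l2_sum f)
      have "(\<Sum>i<K. (cmod (\<Sum>n<M. f n i))\<^sup>2) \<le> (l2norm (\<lambda>i. \<Sum>n<M. f n i))\<^sup>2"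
        by (rule l2_partial_sq_le[OF w])
      also have "\<dots> \<le> C\<^sup>2"
      proof (rule power_mono)
        have "l2norm (\<lambda>i. \<Sum>n<M. f n i) \<le> (\<Sum>n<M. l2norm (f n))" by (rule l2norm_sum) (rule f)
        also have "\<dots> \<le> C" unfolding C_def
          by (rule sum_le_suminf[OF s]) (auto intro: l2norm_nonneg f)
        finally show "l2norm (\<lambda>i. \<Sum>n<M. f n i) \<le> C" .
      qed (rule l2norm_nonneg[OF w])
      finally show "(\<Sum>i<K. (cmod (\<Sum>n<M. f n i))\<^sup>2) \<le> C\<^sup>2" .
    qed
  qed
  have sm: "summable (\<lambda>i. (cmod (ser f i))\<^sup>2)"
    by (rule summableI_nonneg_bounded[where x="C\<^sup>2"]) (simp, rule part)
  then show "ser f \<in> l2" by (rule l2I)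
  have "(\<Sum>i. (cmod (ser f i))\<^sup>2) \<le> C\<^sup>2" by (rule suminf_le_const[OF sm part])
  then have "l2norm (ser f) \<le> sqrt (C\<^sup>2)" unfolding l2norm_def by (rule real_sqrt_le_mono)
  then show "l2norm (ser f) \<le> (\<Sum>n. l2norm (f n))" using C0 unfolding C_def by simp
qed

lemma ser_tail:
  assumes f: "\<And>n. f n \<in> l2" and s: "summable (\<lambda>n. l2norm (f n))"
  shows "(\<lambda>i. (\<Sum>n<N. f n i) - ser f i) \<in> l2"
    "l2norm (\<lambda>i. (\<Sum>n<N. f n i) - ser f i) \<le> (\<Sum>n. l2norm (f (n + N)))"
proof -
  have f': "\<And>n. f (n + N) \<in> l2" using f .
  have s': "summable (\<lambda>n. l2norm (f (n + N)))" using summable_ignore_initial_segment[OF s] .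
  have eq: "(\<lambda>i. (\<Sum>n<N. f n i) - ser f i) = (\<lambda>i. - ser (\<lambda>n. f (n + N)) i)"
  proof
    fix i
    have "ser f i = (\<Sum>n. f (n + N) i) + (\<Sum>n<N. f n i)"
      unfolding ser_def
      by (rule suminf_split_initial_segment[OF summable_norm_cancel[OF ser_comp_summable[OF f s]]])
    then show "(\<Sum>n<N. f n i) - ser f i = - ser (\<lambda>n. f (n + N)) i" by (simp add: ser_def)
  qed
  show "(\<lambda>i. (\<Sum>n<N. f n i) - ser f i) \<in> l2" unfolding eq by (intro l2_uminus ser_l2 f' s')
  show "l2norm (\<lambda>i. (\<Sum>n<N. f n i) - ser f i) \<le> (\<Sum>n. l2norm (f (n + N)))"
    unfolding eq l2norm_uminus by (rule ser_l2(2)[OF f' s'])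
qed

lemma tail_tendsto_zero:
  assumes "summable (g :: nat \<Rightarrow> real)"
  shows "(\<lambda>N. \<Sum>n. g (n + N)) \<longlonglongrightarrow> 0"
proof (rule LIMSEQ_I)
  fix r :: real assume "0 < r"
  from suminf_exist_split[OF this assms] obtain N where "\<forall>n\<ge>N. norm (\<Sum>i. g (i + n)) < r" by blast
  then show "\<exists>no. \<forall>n\<ge>no. norm ((\<Sum>i. g (i + n)) - 0) < r" by auto
qed

lemma LIM_by_bound:
  fixes X :: "nat \<Rightarrow> 'a::real_normed_vector"
  assumes "\<And>N. norm (X N - l) \<le> g N" "g \<longlonglongrightarrow> 0"
  shows "X \<longlonglongrightarrow> l"
  by (rule LIM_zero_cancel, rule Lim_null_comparison[OF _ assms(2)]) (use assms(1) in \<open>simp add: always_eventually\<close>)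

lemma l2inner_sum_right:
  assumes "x \<in> l2" "\<And>n. n \<in> F \<Longrightarrow> f n \<in> l2"
  shows "l2inner x (\<lambda>i. \<Sum>n\<in>F. f n i) = (\<Sum>n\<in>F. l2inner x (f n))"
  using assms(2)
proof (induction F rule: infinite_finite_induct)
  case (infinite A) then show ?case
    using l2inner_scale_right[OF assms(1) l2_zero, of 0] by simp
next
  case empty then show ?case
    using l2inner_scale_right[OF assms(1) l2_zero, of 0] by simp
next
  case (insert a A)
  have "l2inner x (\<lambda>i. \<Sum>n\<in>insert a A. f n i) = l2inner x (\<lambda>i. f a i + (\<Sum>n\<in>A. f n i))"
    using insert by simp
  also have "\<dots> = l2inner x (f a) + l2inner x (\<lambda>i. \<Sum>n\<in>A. f n i)"
    using insert by (intro l2inner_add_right assms(1) l2_sum) auto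
  finally show ?case using insert by simp
qed


lemma ser_inner:
  assumes x: "x \<in> l2" and f: "\<And>n. f n \<in> l2" and s: "summable (\<lambda>n. l2norm (f n))"
  shows "(\<lambda>n. l2inner x (f n)) sums l2inner x (ser f)"
proof -
  have T: "(\<lambda>N. l2norm x * (\<Sum>n. l2norm (f (n + N)))) \<longlonglongrightarrow> 0"
    using tendsto_mult_right_zero[OF tail_tendsto_zero[OF s]] .
  have le: "norm ((\<Sum>n<N. l2inner x (f n)) - l2inner x (ser f)) \<le> l2norm x * (\<Sum>n. l2norm (f (n + N)))" for N
  proof -
    have "(\<Sum>n<N. l2inner x (f n)) - l2inner x (ser f) = l2inner x (\<lambda>i. (\<Sum>n<N. f n i) - ser f i)"
    proof -
      have e1: "l2inner x (\<lambda>i. \<Sum>n<N. f n i) = (\<Sum>n<N. l2inner x (f n))"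
        by (rule l2inner_sum_right[OF x f])
      have e2: "l2inner x (\<lambda>i. (\<Sum>n<N. f n i) - ser f i) = l2inner x (\<lambda>i. \<Sum>n<N. f n i) - l2inner x (ser f)"
        by (rule l2inner_diff_right[OF x l2_sum ser_l2(1)[OF f s]]) (rule f)
      show ?thesis unfolding e2 e1 ..
    qed
    also have "norm \<dots> \<le> l2norm x * l2norm (\<lambda>i. (\<Sum>n<N. f n i) - ser f i)"
      by (rule l2_CS[OF x ser_tail(1)[OF f s]])
    also have "\<dots> \<le> l2norm x * (\<Sum>n. l2norm (f (n + N)))"
      by (intro mult_left_mono ser_tail(2)[OF f s] l2norm_nonneg x)
    finally show ?thesis .
  qed
  show ?thesis unfolding sums_def by (rule LIM_by_bound[OF le T])
qed

lemma op_on_l2D: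
  assumes "op_on_l2 L"
  shows "x \<in> l2 \<Longrightarrow> L x \<in> l2"
    "x \<in> l2 \<Longrightarrow> y \<in> l2 \<Longrightarrow> L (\<lambda>i. x i + y i) = (\<lambda>i. L x i + L y i)"
    "x \<in> l2 \<Longrightarrow> L (\<lambda>i. c * x i) = (\<lambda>i. c * L x i)"
  using assms unfolding op_on_l2_def by auto

lemma op_zero: "op_on_l2 L \<Longrightarrow> L (\<lambda>i. 0) = (\<lambda>i. 0)"
  using op_on_l2D(3)[of L "\<lambda>i. 0" 0] l2_zero by simp

lemma op_diff:
  assumes "op_on_l2 L" "x \<in> l2" "y \<in> l2"
  shows "L (\<lambda>i. x i - y i) = (\<lambda>i. L x i - L y i)"
  using op_on_l2D(2)[OF assms(1,2) l2_scale[OF assms(3), of "-1"]]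
    op_on_l2D(3)[OF assms(1,3), of "-1"] by simp

lemma op_sum:
  assumes L: "op_on_l2 L" and f: "\<And>n. n \<in> F \<Longrightarrow> f n \<in> l2"
  shows "L (\<lambda>i. \<Sum>n\<in>F. f n i) = (\<lambda>i. \<Sum>n\<in>F. L (f n) i)"
  using f
proof (induction F rule: infinite_finite_induct)
  case (infinite A) then show ?case using op_zero[OF L] by simp
next
  case empty then show ?case using op_zero[OF L] by simp
next
  case (insert a A)
  have "L (\<lambda>i. \<Sum>n\<in>insert a A. f n i) = L (\<lambda>i. f a i + (\<Sum>n\<in>A. f n i))"
    using insert by simp
  also have "\<dots> = (\<lambda>i. L (f a) i + L (\<lambda>i. \<Sum>n\<in>A. f n i) i)"
    using insert by (intro op_on_l2D(2)[OF L] l2_sum) auto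
  finally show ?case using insert by simp
qed

lemma ser_op:
  assumes L: "op_on_l2 L" and Lb: "\<And>z. z \<in> l2 \<Longrightarrow> l2norm (L z) \<le> l2norm z"
    and f: "\<And>n. f n \<in> l2" and s: "summable (\<lambda>n. l2norm (f n))"
  shows "(\<lambda>n. L (f n) i) sums L (ser f) i"
proof -
  have T: "(\<lambda>N. (\<Sum>n. l2norm (f (n + N)))) \<longlonglongrightarrow> 0" using tail_tendsto_zero[OF s] .
  have le: "norm ((\<Sum>n<N. L (f n) i) - L (ser f) i) \<le> (\<Sum>n. l2norm (f (n + N)))" for N
  proof -
    have d: "(\<lambda>i. (\<Sum>n<N. f n i) - ser f i) \<in> l2" by (rule ser_tail(1)[OF f s])
    have "(\<Sum>n<N. L (f n) i) - L (ser f) i = L (\<lambda>i. (\<Sum>n<N. f n i) - ser f i) i"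
    proof -
      have e1: "L (\<lambda>i. \<Sum>n<N. f n i) = (\<lambda>i. \<Sum>n<N. L (f n) i)"
        by (rule op_sum[OF L f])
      have e2: "L (\<lambda>i. (\<Sum>n<N. f n i) - ser f i) = (\<lambda>i. L (\<lambda>i. \<Sum>n<N. f n i) i - L (ser f) i)"
        by (rule op_diff[OF L l2_sum ser_l2(1)[OF f s]]) (rule f)
      show ?thesis unfolding e2 e1 ..
    qed
    also have "norm \<dots> \<le> l2norm (L (\<lambda>i. (\<Sum>n<N. f n i) - ser f i))"
      by (rule comp_le_l2norm[OF op_on_l2D(1)[OF L d]])
    also have "\<dots> \<le> l2norm (\<lambda>i. (\<Sum>n<N. f n i) - ser f i)" by (rule Lb[OF d])
    also have "\<dots> \<le> (\<Sum>n. l2norm (f (n + N)))" by (rule ser_tail(2)[OF f s])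
    finally show ?thesis .
  qed
  show ?thesis unfolding sums_def by (rule LIM_by_bound[OF le T])
qed


lemma double_series:
  fixes c a :: "nat \<Rightarrow> complex"
  assumes sc: "summable (\<lambda>n. norm (c n))" and ab: "\<And>k. norm (a k) \<le> B"
  shows "\<exists>S. (\<lambda>n. c n * (\<Sum>m. c m * a (n+m))) sums S
            \<and> (\<lambda>k. (\<Sum>j\<in>{0..k}. c j * c (k-j)) * a k) sums S"
proof -
  define f where "f = (\<lambda>(n,m). c n * c m * a (n+m))"
  define C where "C = (\<Sum>n. norm (c n))"
  have B0: "0 \<le> B" using ab[of 0] norm_ge_zero[of "a 0"] by linarith
  have pr: "(\<lambda>(n,m). norm (c n) * norm (c m)) summable_on (UNIV :: (nat \<times> nat) set)"
  proof (rule nonneg_bdd_above_summable_on)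
    show "bdd_above (sum (\<lambda>(n,m). norm (c n) * norm (c m)) ` {F. F \<subseteq> UNIV \<and> finite F})"
    proof (rule bdd_aboveI2)
      fix F :: "(nat \<times> nat) set" assume "F \<in> {F. F \<subseteq> UNIV \<and> finite F}"
      then have fin: "finite F" by simp
      define K where "K = Suc (Max (fst ` F \<union> snd ` F))"
      have sub: "F \<subseteq> {..<K} \<times> {..<K}"
      proof
        fix p assume "p \<in> F"
        then have "fst p \<le> Max (fst ` F \<union> snd ` F)" "snd p \<le> Max (fst ` F \<union> snd ` F)"
          using fin by (auto intro: Max_ge)
        then show "p \<in> {..<K} \<times> {..<K}" unfolding K_def by (cases p) auto
      qed
      have "sum (\<lambda>(n,m). norm (c n) * norm (c m)) F \<le> sum (\<lambda>(n,m). norm (c n) * norm (c m)) ({..<K} \<times> {..<K})"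
        by (rule sum_mono2[OF _ sub]) auto
      also have "\<dots> = (\<Sum>n<K. norm (c n)) * (\<Sum>m<K. norm (c m))"
        by (simp add: sum_product sum.cartesian_product)
      also have "\<dots> \<le> C * C"
        unfolding C_def by (intro mult_mono sum_le_suminf sc suminf_nonneg sum_nonneg) auto
      finally show "sum (\<lambda>(n,m). norm (c n) * norm (c m)) F \<le> C * C" .
    qed
  qed auto
  have pr2: "(\<lambda>(n,m). B * (norm (c n) * norm (c m))) summable_on (UNIV :: (nat \<times> nat) set)"
    using summable_on_cmult_right[OF pr, of B] by (simp add: case_prod_unfold)
  have fa: "(\<lambda>p. norm (f p)) summable_on UNIV"
  proof (rule Infinite_Sum.abs_summable_on_comparison_test[where g="\<lambda>(n,m). B * (norm (c n) * norm (c m))"])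
    show "(\<lambda>p. norm ((\<lambda>(n,m). B * (norm (c n) * norm (c m))) p)) summable_on UNIV"
      using pr2 B0 by (simp add: case_prod_unfold)
    fix p :: "nat \<times> nat"
    obtain n m where p: "p = (n,m)" by (cases p)
    have "norm (f p) = norm (c n) * norm (c m) * norm (a (n+m))"
      by (simp add: f_def p norm_mult)
    also have "\<dots> \<le> norm (c n) * norm (c m) * B" by (intro mult_left_mono ab) auto
    finally show "norm (f p) \<le> norm ((\<lambda>(n,m). B * (norm (c n) * norm (c m))) p)"
      using B0 by (simp add: p mult_ac)
  qed
  have fs: "f summable_on UNIV" by (rule Infinite_Sum.abs_summable_summable[OF fa])
  then obtain S where fS: "(f has_sum S) UNIV" using summable_on_def by blast
  have inner: "((\<lambda>m. f (n, m)) has_sum (c n * (\<Sum>m. c m * a (n+m)))) UNIV" for n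
  proof -
    have s1: "summable (\<lambda>m. norm (c m * a (n+m)))"
    proof (rule summable_comparison_test[OF _ summable_mult2[OF sc, of B]])
      show "\<exists>N. \<forall>m\<ge>N. norm (norm (c m * a (n + m))) \<le> norm (c m) * B"
        by (intro exI allI impI) (simp add: norm_mult mult_left_mono ab)
    qed
    have s2: "summable (\<lambda>m. norm (f (n,m)))"
      using summable_mult[OF s1, of "norm (c n)"] by (simp add: f_def norm_mult mult_ac)
    have "(\<lambda>m. c n * (c m * a (n+m))) sums (c n * (\<Sum>m. c m * a (n+m)))"
      by (rule sums_mult, rule summable_sums, rule summable_norm_cancel[OF s1])
    then have "(\<lambda>m. f (n,m)) sums (c n * (\<Sum>m. c m * a (n+m)))"
      by (simp add: f_def mult_ac)
    then show ?thesis by (rule norm_summable_imp_has_sum[OF s2])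
  qed
  have fS': "(f has_sum S) (Sigma UNIV (\<lambda>_. UNIV))" using fS by simp
  have h1: "((\<lambda>n. c n * (\<Sum>m. c m * a (n+m))) has_sum S) UNIV"
    by (rule has_sum_SigmaD[OF fS' inner])
  define g where "g = (\<lambda>(k,l). c l * c (k-l) * a k)"
  have gS: "(g has_sum S) (Sigma UNIV (\<lambda>k. {0..k}))"
  proof -
    have "(g has_sum S) (Sigma UNIV (\<lambda>k. {0..k})) = (f has_sum S) UNIV"
      by (rule has_sum_reindex_bij_witness[where j="\<lambda>(k,l). (l, k-l)" and i="\<lambda>(n,m). (n+m, n)"])
        (auto simp: f_def g_def)
    then show ?thesis using fS by simp
  qed
  have inner2: "((\<lambda>l. g (k, l)) has_sum (\<Sum>j\<in>{0..k}. c j * c (k-j)) * a k) {0..k}" for k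
  proof -
    have "((\<lambda>l. g (k, l)) has_sum (\<Sum>l\<in>{0..k}. g (k, l))) {0..k}" by (rule has_sum_finite) simp
    then show ?thesis by (simp add: g_def sum_distrib_right)
  qed
  have h2: "((\<lambda>k. (\<Sum>j\<in>{0..k}. c j * c (k-j)) * a k) has_sum S) UNIV"
    by (rule has_sum_SigmaD[OF gS inner2])
  show ?thesis using has_sum_imp_sums[OF h1] has_sum_imp_sums[OF h2] by blast
qed


lemma quad_lemma:
  fixes a P Q :: real
  assumes q: "\<And>t. 0 \<le> t*t*a*P - 2*t*a + Q" and a: "0 \<le> a" and P: "0 \<le> P" and Q: "0 \<le> Q"
  shows "a \<le> P * Q"
proof (cases "P = 0")
  case True
  show ?thesis
  proof (rule ccontr)
    assume "\<not> a \<le> P * Q"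
    then have "0 < a" using True by simp
    have "0 \<le> (Q+1)/(2*a)*((Q+1)/(2*a))*a*P - 2*((Q+1)/(2*a))*a + Q" by (rule q)
    also have "\<dots> = -1" using \<open>0 < a\<close> True by (simp add: field_simps)
    finally show False by simp
  qed
next
  case False
  then have "0 < P" using P by simp
  have "0 \<le> (1/P)*(1/P)*a*P - 2*(1/P)*a + Q" by (rule q)
  also have "\<dots> = (P*Q - a) / P" using \<open>0 < P\<close> by (simp add: field_simps power2_eq_square)
  finally show ?thesis using \<open>0 < P\<close> by (simp add: divide_nonneg_pos zero_le_divide_iff)
qed

definition Ao :: "op \<Rightarrow> op" where "Ao R = (\<lambda>y i. R y i - y i)"
definition pw :: "op \<Rightarrow> nat \<Rightarrow> op" where "pw R n = Ao R ^^ n"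

definition Fv :: "op \<Rightarrow> vec \<Rightarrow> nat \<Rightarrow> vec" where
  "Fv R x n = (\<lambda>i. complex_of_real (sqrt_coeff n) * pw R n x i)"
definition Sop :: "op \<Rightarrow> op" where "Sop R x = ser (Fv R x)"

lemma op_comp: "op_on_l2 L1 \<Longrightarrow> op_on_l2 L2 \<Longrightarrow> op_on_l2 (L1 \<circ> L2)"
  unfolding op_on_l2_def by auto

lemma op_id: "op_on_l2 id"
  unfolding op_on_l2_def by auto

context
  fixes R :: op
  assumes dens: "density_op R"
begin

lemma R_op: "op_on_l2 R" using dens by (simp add: density_op_def)
lemma R_l2: "x \<in> l2 \<Longrightarrow> R x \<in> l2" using op_on_l2D(1)[OF R_op] .
lemma R_sa: "x \<in> l2 \<Longrightarrow> y \<in> l2 \<Longrightarrow> l2inner x (R y) = l2inner (R x) y"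
  using dens by (simp add: density_op_def self_adjoint_op_def)
lemma R_pos: "x \<in> l2 \<Longrightarrow> Im (l2inner x (R x)) = 0" "x \<in> l2 \<Longrightarrow> 0 \<le> Re (l2inner x (R x))"
  using dens by (simp_all add: density_op_def positive_op_def)
lemma R_tr: "(\<lambda>i. l2inner (basis_vec i) (R (basis_vec i))) sums 1"
  using dens by (simp add: density_op_def)

lemma R_CS:
  assumes x: "x \<in> l2" and y: "y \<in> l2"
  shows "(cmod (l2inner y (R x)))\<^sup>2 \<le> Re (l2inner y (R y)) * Re (l2inner x (R x))"
proof -
  define m where "m = l2inner y (R x)"
  define a where "a = (cmod m)\<^sup>2"
  have mm: "cnj m * m = complex_of_real a" unfolding a_def
    by (metis complex_norm_square mult.commute of_real_power)
  have xRy: "l2inner x (R y) = cnj m"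
    unfolding m_def using R_sa[OF x y] l2inner_cnj[OF y R_l2[OF x]] by simp
  have key: "0 \<le> t*t*a*Re (l2inner y (R y)) - 2*t*a + Re (l2inner x (R x))" for t :: real
  proof -
    define s where "s = complex_of_real t * m"
    define v where "v = (\<lambda>i. s * y i - x i)"
    have sy: "(\<lambda>i. s * y i) \<in> l2" by (rule l2_scale[OF y])
    have v: "v \<in> l2" unfolding v_def by (rule l2_diff[OF sy x])
    have Rv: "R v = (\<lambda>i. s * R y i - R x i)"
      unfolding v_def using op_diff[OF R_op sy x] op_on_l2D(3)[OF R_op y, of s] by simp
    have sRy: "(\<lambda>i. s * R y i) \<in> l2" by (rule l2_scale[OF R_l2[OF y]])
    have vw: "l2inner v w = l2inner (\<lambda>i. s * y i) w - l2inner x w" if "w \<in> l2" for w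
      unfolding v_def by (rule l2inner_diff_left[OF sy x that])
    have "l2inner v (R v) = l2inner (\<lambda>i. s * y i) (R v) - l2inner x (R v)"
      by (rule vw[OF R_l2[OF v]])
    also have "l2inner (\<lambda>i. s * y i) (R v) = cnj s * l2inner y (R v)"
      by (rule l2inner_scale_left[OF y R_l2[OF v]])
    also have "l2inner y (R v) = s * l2inner y (R y) - m"
      unfolding Rv m_def
      using l2inner_diff_right[OF y sRy R_l2[OF x]] l2inner_scale_right[OF y R_l2[OF y]] by simp
    also have "l2inner x (R v) = s * cnj m - l2inner x (R x)"
      unfolding Rv
      using l2inner_diff_right[OF x sRy R_l2[OF x]] l2inner_scale_right[OF x R_l2[OF y]] xRy by simp
    finally have e: "l2inner v (R v) = cnj s * (s * l2inner y (R y) - m) - (s * cnj m - l2inner x (R x))" .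
    have e2: "l2inner v (R v) = complex_of_real (t*t*a) * l2inner y (R y) - complex_of_real (2*t*a) + l2inner x (R x)"
      unfolding e s_def
      by (simp add: algebra_simps mm[symmetric])
    have "0 \<le> Re (l2inner v (R v))" by (rule R_pos(2)[OF v])
    then show ?thesis unfolding e2 by simp
  qed
  have "a \<le> Re (l2inner y (R y)) * Re (l2inner x (R x))"
    by (rule quad_lemma[OF key]) (auto simp: a_def intro: R_pos x y)
  then show ?thesis by (simp add: a_def m_def)
qed

lemma trace_re: "(\<lambda>i. Re (l2inner (basis_vec i) (R (basis_vec i)))) sums 1"
  using sums_Re[OF R_tr] by simp

lemma Rx_sq_le:
  assumes x: "x \<in> l2"
  shows "(l2norm (R x))\<^sup>2 \<le> Re (l2inner x (R x))"
proof -
  define d where "d = (\<lambda>i. Re (l2inner (basis_vec i) (R (basis_vec i))))"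
  have d: "d sums 1" unfolding d_def by (rule trace_re)
  have le: "(cmod (R x i))\<^sup>2 \<le> d i * Re (l2inner x (R x))" for i
    using R_CS[OF x basis_vec_l2, of i] by (simp add: basis_inner d_def)
  have "(l2norm (R x))\<^sup>2 = (\<Sum>i. (cmod (R x i))\<^sup>2)" by (rule l2norm_sq[OF R_l2[OF x]])
  also have "\<dots> \<le> (\<Sum>i. d i * Re (l2inner x (R x)))"
    by (rule suminf_le[OF le l2D[OF R_l2[OF x]] summable_mult2[OF sums_summable[OF d]]])
  also have "\<dots> = Re (l2inner x (R x))"
    using sums_unique[OF sums_mult2[OF d, of "Re (l2inner x (R x))"]] by simp
  finally show ?thesis .
qed

lemma quad_le_norm:
  assumes x: "x \<in> l2"
  shows "Re (l2inner x (R x)) \<le> (l2norm x)\<^sup>2"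
proof -
  define q where "q = Re (l2inner x (R x))"
  have q0: "0 \<le> q" unfolding q_def by (rule R_pos(2)[OF x])
  have "q \<le> cmod (l2inner x (R x))" unfolding q_def by (rule complex_Re_le_cmod)
  also have "\<dots> \<le> l2norm x * l2norm (R x)" by (rule l2_CS[OF x R_l2[OF x]])
  finally have q1: "q \<le> l2norm x * l2norm (R x)" .
  have q2: "(l2norm (R x))\<^sup>2 \<le> q" unfolding q_def by (rule Rx_sq_le[OF x])
  have n0: "0 \<le> l2norm x" "0 \<le> l2norm (R x)" using l2norm_nonneg x R_l2 by auto
  have "q * q \<le> (l2norm x)\<^sup>2 * (l2norm (R x))\<^sup>2"
    using mult_mono[OF q1 q1 mult_nonneg_nonneg[OF n0] q0] by (simp add: power2_eq_square mult_ac)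
  also have "\<dots> \<le> (l2norm x)\<^sup>2 * q" by (intro mult_left_mono q2) simp
  finally have "q * q \<le> (l2norm x)\<^sup>2 * q" .
  then show ?thesis unfolding q_def[symmetric]
    using q0 by (cases "q = 0") (auto simp: mult_le_cancel_right)
qed


lemma A_op: "op_on_l2 (Ao R)"
  unfolding op_on_l2_def Ao_def
  using op_on_l2D[OF R_op] by (auto intro: l2_diff simp: algebra_simps)

lemma A_l2: "x \<in> l2 \<Longrightarrow> Ao R x \<in> l2" using op_on_l2D(1)[OF A_op] .

lemma A_norm:
  assumes x: "x \<in> l2" shows "l2norm (Ao R x) \<le> l2norm x"
proof -
  have "(l2norm (Ao R x))\<^sup>2 = (l2norm (R x))\<^sup>2 - 2 * Re (l2inner (R x) x) + (l2norm x)\<^sup>2"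
    unfolding Ao_def by (rule l2norm_diff_sq[OF R_l2[OF x] x])
  also have "l2inner (R x) x = l2inner x (R x)" using R_sa[OF x x] by simp
  finally have "(l2norm (Ao R x))\<^sup>2 \<le> (l2norm x)\<^sup>2"
    using Rx_sq_le[OF x] R_pos(2)[OF x] by linarith
  then show ?thesis by (rule power2_le_imp_le) (rule l2norm_nonneg[OF x])
qed

lemma A_sa: "x \<in> l2 \<Longrightarrow> y \<in> l2 \<Longrightarrow> l2inner x (Ao R y) = l2inner (Ao R x) y"
  unfolding Ao_def
  by (simp add: l2inner_diff_right l2inner_diff_left R_l2 R_sa)

lemma A_quad:
  assumes x: "x \<in> l2"
  shows "Im (- l2inner x (Ao R x)) = 0" "0 \<le> Re (- l2inner x (Ao R x))"
    "Re (- l2inner x (Ao R x)) \<le> (l2norm x)\<^sup>2"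
proof -
  have e: "l2inner x (Ao R x) = l2inner x (R x) - complex_of_real ((l2norm x)\<^sup>2)"
    unfolding Ao_def by (simp add: l2inner_diff_right x R_l2 l2inner_self)
  show "Im (- l2inner x (Ao R x)) = 0" unfolding e using R_pos(1)[OF x] by simp
  show "0 \<le> Re (- l2inner x (Ao R x))" unfolding e using quad_le_norm[OF x] by simp
  show "Re (- l2inner x (Ao R x)) \<le> (l2norm x)\<^sup>2" unfolding e using R_pos(2)[OF x] by simp
qed

lemma pw_Suc: "pw R (Suc n) x = Ao R (pw R n x)"
  by (simp add: pw_def)

lemma pw_Suc': "pw R (Suc n) x = pw R n (Ao R x)"
  by (simp add: pw_def funpow_swap1)

lemma pw_0: "pw R 0 x = x" by (simp add: pw_def)

lemma pw_add: "pw R (n + m) x = pw R n (pw R m x)"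
  by (simp add: pw_def funpow_add)

lemma pw_op: "op_on_l2 (pw R n)"
proof (induction n)
  case 0 then show ?case using op_id by (simp add: pw_def id_def)
next
  case (Suc n)
  have "pw R (Suc n) = Ao R \<circ> pw R n" by (simp add: pw_def)
  then show ?case using op_comp[OF A_op Suc] by (simp only:)
qed

lemma pw_l2: "x \<in> l2 \<Longrightarrow> pw R n x \<in> l2" using op_on_l2D(1)[OF pw_op] .

lemma pw_norm: "x \<in> l2 \<Longrightarrow> l2norm (pw R n x) \<le> l2norm x"
proof (induction n)
  case 0 then show ?case by (simp add: pw_0)
next
  case (Suc n)
  then show ?case using A_norm[OF pw_l2[OF Suc.prems, of n]] by (simp add: pw_Suc)
qed

lemma pw_sa: "x \<in> l2 \<Longrightarrow> y \<in> l2 \<Longrightarrow> l2inner x (pw R n y) = l2inner (pw R n x) y"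
proof (induction n arbitrary: x)
  case 0 then show ?case by (simp add: pw_0)
next
  case (Suc n)
  have "l2inner x (pw R (Suc n) y) = l2inner x (Ao R (pw R n y))" by (simp add: pw_Suc)
  also have "\<dots> = l2inner (Ao R x) (pw R n y)" by (rule A_sa[OF Suc.prems(1) pw_l2[OF Suc.prems(2)]])
  also have "\<dots> = l2inner (pw R n (Ao R x)) y" by (rule Suc.IH[OF A_l2[OF Suc.prems(1)] Suc.prems(2)])
  also have "\<dots> = l2inner (pw R (Suc n) x) y" by (simp add: pw_Suc')
  finally show ?case .
qed

lemma pw_quad:
  assumes x: "x \<in> l2"
  shows "Im ((-1)^n * l2inner x (pw R n x)) = 0" "0 \<le> Re ((-1)^n * l2inner x (pw R n x))"
    "Re ((-1)^n * l2inner x (pw R n x)) \<le> (l2norm x)\<^sup>2"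
proof -
  have "Im ((-1)^n * l2inner x (pw R n x)) = 0 \<and> 0 \<le> Re ((-1)^n * l2inner x (pw R n x))
     \<and> Re ((-1)^n * l2inner x (pw R n x)) \<le> (l2norm x)\<^sup>2"
  proof (cases "even n")
    case True
    then obtain k where n: "n = k + k" by (metis evenE mult_2)
    have z: "pw R k x \<in> l2" by (rule pw_l2[OF x])
    have "l2inner x (pw R n x) = l2inner (pw R k x) (pw R k x)"
      unfolding n pw_add by (rule pw_sa[OF x z])
    also have "\<dots> = complex_of_real ((l2norm (pw R k x))\<^sup>2)" by (rule l2inner_self[OF z])
    finally have e: "l2inner x (pw R n x) = complex_of_real ((l2norm (pw R k x))\<^sup>2)" .
    have ev: "(-1::complex)^n = 1" using True by simp
    have "(l2norm (pw R k x))\<^sup>2 \<le> (l2norm x)\<^sup>2"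
      by (intro power_mono pw_norm x l2norm_nonneg z)
    then show ?thesis unfolding e ev by simp
  next
    case False
    then obtain k where n: "n = k + Suc k" by (metis oddE mult_2 add_Suc_right Suc_eq_plus1)
    have z: "pw R k x \<in> l2" by (rule pw_l2[OF x])
    have "l2inner x (pw R n x) = l2inner (pw R k x) (pw R (Suc k) x)"
      unfolding n pw_add by (rule pw_sa[OF x pw_l2[OF x]])
    also have "\<dots> = l2inner (pw R k x) (Ao R (pw R k x))" by (simp add: pw_Suc)
    finally have e: "(-1)^n * l2inner x (pw R n x) = - l2inner (pw R k x) (Ao R (pw R k x))"
      using False by simp
    have "(l2norm (pw R k x))\<^sup>2 \<le> (l2norm x)\<^sup>2"
      by (intro power_mono pw_norm x l2norm_nonneg z)
    then show ?thesis unfolding e using A_quad[OF z] by linarith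
  qed
  then show "Im ((-1)^n * l2inner x (pw R n x)) = 0" "0 \<le> Re ((-1)^n * l2inner x (pw R n x))"
    "Re ((-1)^n * l2inner x (pw R n x)) \<le> (l2norm x)\<^sup>2" by auto
qed


lemma F_l2: "x \<in> l2 \<Longrightarrow> Fv R x n \<in> l2"
  unfolding Fv_def by (intro l2_scale pw_l2)

lemma F_norm: assumes x: "x \<in> l2" shows "l2norm (Fv R x n) \<le> \<bar>sqrt_coeff n\<bar> * l2norm x"
  unfolding Fv_def l2norm_scale[OF pw_l2[OF x]]
  by (simp add: mult_left_mono pw_norm x)

lemma F_sum: assumes x: "x \<in> l2" shows "summable (\<lambda>n. l2norm (Fv R x n))"
proof (rule summable_comparison_test[OF _ summable_mult2[OF summable_sqrt_coeff, of "l2norm x"]])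
  show "\<exists>N. \<forall>n\<ge>N. norm (l2norm (Fv R x n)) \<le> \<bar>sqrt_coeff n\<bar> * l2norm x"
    using F_norm[OF x] l2norm_nonneg[OF F_l2[OF x]] by auto
qed

lemma F_comp_summable: "x \<in> l2 \<Longrightarrow> summable (\<lambda>n. Fv R x n i)"
  by (rule summable_norm_cancel, rule ser_comp_summable[OF F_l2 F_sum])

lemma S_l2: "x \<in> l2 \<Longrightarrow> Sop R x \<in> l2"
  unfolding Sop_def by (rule ser_l2(1)[OF F_l2 F_sum])

lemma partial_eq: "sqrt_partial R N x = (\<lambda>i. \<Sum>n<N. Fv R x n i)"
  by (simp add: sqrt_partial_def Fv_def pw_def Ao_def)

lemma S_tendsto: "op_norm_tendsto (sqrt_partial R) (Sop R)"
  unfolding op_norm_tendsto_def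
proof (intro allI impI)
  fix e :: real assume e: "0 < e"
  obtain N0 where N0: "\<forall>N\<ge>N0. norm (\<Sum>n. \<bar>sqrt_coeff (n + N)\<bar>) < e"
    using suminf_exist_split[OF e summable_sqrt_coeff] by blast
  show "\<exists>N0. \<forall>N\<ge>N0. \<forall>x\<in>l2. l2norm (\<lambda>i. sqrt_partial R N x i - Sop R x i) \<le> e * l2norm x"
  proof (intro exI allI impI ballI)
    fix N x assume N: "N0 \<le> N" and x: "x \<in> l2"
    have "l2norm (\<lambda>i. sqrt_partial R N x i - Sop R x i) = l2norm (\<lambda>i. (\<Sum>n<N. Fv R x n i) - ser (Fv R x) i)"
      by (simp add: partial_eq Sop_def)
    also have "\<dots> \<le> (\<Sum>n. l2norm (Fv R x (n + N)))" by (rule ser_tail(2)[OF F_l2[OF x] F_sum[OF x]])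
    also have "\<dots> \<le> (\<Sum>n. \<bar>sqrt_coeff (n + N)\<bar> * l2norm x)"
      by (rule suminf_le[OF F_norm[OF x] summable_ignore_initial_segment[OF F_sum[OF x]]
            summable_mult2[OF summable_ignore_initial_segment[OF summable_sqrt_coeff]]])
    also have "\<dots> = (\<Sum>n. \<bar>sqrt_coeff (n + N)\<bar>) * l2norm x"
      by (rule suminf_mult2[symmetric, OF summable_ignore_initial_segment[OF summable_sqrt_coeff]])
    also have "\<dots> \<le> e * l2norm x"
      using N0 N by (intro mult_right_mono l2norm_nonneg x) auto
    finally show "l2norm (\<lambda>i. sqrt_partial R N x i - Sop R x i) \<le> e * l2norm x" .
  qed
qed

lemma S_add:
  assumes x: "x \<in> l2" and y: "y \<in> l2"
  shows "Sop R (\<lambda>i. x i + y i) = (\<lambda>i. Sop R x i + Sop R y i)"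
proof
  fix i
  have "Fv R (\<lambda>i. x i + y i) n i = Fv R x n i + Fv R y n i" for n
    unfolding Fv_def using op_on_l2D(2)[OF pw_op x y, of n] by (simp add: algebra_simps)
  then show "Sop R (\<lambda>i. x i + y i) i = Sop R x i + Sop R y i"
    unfolding Sop_def ser_def
    using suminf_add[OF F_comp_summable[OF x] F_comp_summable[OF y]] by simp
qed

lemma S_scale:
  assumes x: "x \<in> l2"
  shows "Sop R (\<lambda>i. c * x i) = (\<lambda>i. c * Sop R x i)"
proof
  fix i
  have "Fv R (\<lambda>i. c * x i) n i = c * Fv R x n i" for n
    unfolding Fv_def using op_on_l2D(3)[OF pw_op x, of n c] by (simp add: algebra_simps)
  then show "Sop R (\<lambda>i. c * x i) i = c * Sop R x i"
    unfolding Sop_def ser_def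
    using suminf_mult[OF F_comp_summable[OF x], of c] by simp
qed

lemma S_op: "op_on_l2 (Sop R)"
  unfolding op_on_l2_def using S_l2 S_add S_scale by blast

lemma S_inner:
  assumes x: "x \<in> l2" and y: "y \<in> l2"
  shows "(\<lambda>n. complex_of_real (sqrt_coeff n) * l2inner x (pw R n y)) sums l2inner x (Sop R y)"
proof -
  have "l2inner x (Fv R y n) = complex_of_real (sqrt_coeff n) * l2inner x (pw R n y)" for n
    unfolding Fv_def by (rule l2inner_scale_right[OF x pw_l2[OF y]])
  then show ?thesis using ser_inner[OF x F_l2[OF y] F_sum[OF y]] by (simp add: Sop_def)
qed

lemma S_sa:
  assumes x: "x \<in> l2" and y: "y \<in> l2"
  shows "l2inner x (Sop R y) = l2inner (Sop R x) y"
proof -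
  have "(\<lambda>n. cnj (complex_of_real (sqrt_coeff n) * l2inner y (pw R n x))) sums cnj (l2inner y (Sop R x))"
    unfolding sums_cnj by (rule S_inner[OF y x])
  moreover have "cnj (l2inner y (pw R n x)) = l2inner x (pw R n y)" for n
    using l2inner_cnj[OF y pw_l2[OF x], of n] pw_sa[OF x y, of n] by simp
  ultimately have "(\<lambda>n. complex_of_real (sqrt_coeff n) * l2inner x (pw R n y)) sums cnj (l2inner y (Sop R x))"
    by simp
  then have "l2inner x (Sop R y) = cnj (l2inner y (Sop R x))"
    using sums_unique2[OF S_inner[OF x y]] by simp
  then show ?thesis using l2inner_cnj[OF y S_l2[OF x]] by simp
qed

lemma S_pos:
  assumes x: "x \<in> l2"
  shows "Im (l2inner x (Sop R x)) = 0" "0 \<le> Re (l2inner x (Sop R x))"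
proof -
  define w where "w = (\<lambda>n. (-1)^n * l2inner x (pw R n x))"
  define r where "r = (\<lambda>n. sqrt_coeff n * (-1)^n)"
  have t: "complex_of_real (sqrt_coeff n) * l2inner x (pw R n x) = complex_of_real (r n) * w n" for n
    by (simp add: r_def w_def)
  have sm: "(\<lambda>n. complex_of_real (r n) * w n) sums l2inner x (Sop R x)"
    using S_inner[OF x x] unfolding t .
  have lim: "(\<lambda>N. \<Sum>n<N. complex_of_real (r n) * w n) \<longlonglongrightarrow> l2inner x (Sop R x)"
    using sm by (simp add: sums_def)
  have imw: "Im (w n) = 0" for n unfolding w_def by (rule pw_quad(1)[OF x])
  have Im0: "Im (\<Sum>n<N. complex_of_real (r n) * w n) = 0" for N
    by (simp add: imw)
  have Re0: "0 \<le> Re (\<Sum>n<N. complex_of_real (r n) * w n)" for N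
  proof -
    have "Re (\<Sum>n<N. complex_of_real (r n) * w n) = (\<Sum>n<N. sqrt_coeff n * (-1)^n * Re (w n))"
      by (simp add: r_def imw)
    also have "\<dots> \<ge> 0"
    proof (rule sqrt_coeff_pos_comb)
      show "Re (w 0) = (l2norm x)\<^sup>2" by (simp add: w_def pw_0 l2inner_self x)
      show "\<And>n. 0 \<le> Re (w n)" unfolding w_def by (rule pw_quad(2)[OF x])
      show "\<And>n. Re (w n) \<le> (l2norm x)\<^sup>2" unfolding w_def by (rule pw_quad(3)[OF x])
    qed
    finally show ?thesis .
  qed
  have "(\<lambda>N. Im (\<Sum>n<N. complex_of_real (r n) * w n)) \<longlonglongrightarrow> Im (l2inner x (Sop R x))"
    by (rule tendsto_Im[OF lim])
  then show "Im (l2inner x (Sop R x)) = 0" unfolding Im0 by (simp add: LIMSEQ_const_iff)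
  have "(\<lambda>N. Re (\<Sum>n<N. complex_of_real (r n) * w n)) \<longlonglongrightarrow> Re (l2inner x (Sop R x))"
    by (rule tendsto_Re[OF lim])
  then show "0 \<le> Re (l2inner x (Sop R x))"
    by (rule LIMSEQ_le_const) (use Re0 in auto)
qed

lemma SS:
  assumes x: "x \<in> l2"
  shows "Sop R (Sop R x) = R x"
proof
  fix i
  define a where "a = (\<lambda>k. pw R k x i)"
  define c where "c = (\<lambda>n. complex_of_real (sqrt_coeff n))"
  have ab: "norm (a k) \<le> l2norm x" for k
    unfolding a_def using comp_le_l2norm[OF pw_l2[OF x], of k i] pw_norm[OF x, of k] by simp
  have sc: "summable (\<lambda>n. norm (c n))" unfolding c_def using summable_sqrt_coeff by simp
  have inner: "pw R n (Sop R x) i = (\<Sum>m. c m * a (n+m))" for n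
  proof -
    have "(\<lambda>m. pw R n (Fv R x m) i) sums pw R n (ser (Fv R x)) i"
      by (rule ser_op[OF pw_op pw_norm F_l2[OF x] F_sum[OF x]])
    moreover have "pw R n (Fv R x m) i = c m * a (n+m)" for m
      unfolding Fv_def a_def c_def using op_on_l2D(3)[OF pw_op pw_l2[OF x], of n "sqrt_coeff m" m]
      by (simp add: pw_add)
    ultimately show ?thesis by (simp add: Sop_def sums_iff)
  qed
  have "Sop R (Sop R x) i = (\<Sum>n. c n * pw R n (Sop R x) i)"
    by (simp only: Sop_def[of R "Sop R x"] ser_def Fv_def c_def)
  then have lhs: "Sop R (Sop R x) i = (\<Sum>n. c n * (\<Sum>m. c m * a (n+m)))"
    by (simp only: inner)
  obtain S' where S1: "(\<lambda>n. c n * (\<Sum>m. c m * a (n+m))) sums S'"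
    and S2: "(\<lambda>k. (\<Sum>j\<in>{0..k}. c j * c (k-j)) * a k) sums S'"
    using double_series[OF sc, of a "l2norm x"] ab by blast
  have conv: "(\<Sum>j\<in>{0..k}. c j * c (k-j)) = (if k \<le> 1 then 1 else 0)" for k
  proof -
    have "(\<Sum>j\<in>{0..k}. c j * c (k-j)) = complex_of_real (\<Sum>j\<in>{0..k}. sqrt_coeff j * sqrt_coeff (k-j))"
      by (simp add: c_def)
    then show ?thesis by (simp add: sqrt_coeff_conv)
  qed
  have "(\<lambda>k. (\<Sum>j\<in>{0..k}. c j * c (k-j)) * a k) sums (\<Sum>k\<in>{0,1}. (\<Sum>j\<in>{0..k}. c j * c (k-j)) * a k)"
    by (rule sums_finite) (auto simp: conv)
  then have "S' = a 0 + a 1" using sums_unique2[OF S2] by (simp add: conv)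
  also have "\<dots> = R x i" by (simp add: a_def pw_0 pw_Suc[of 0, simplified] pw_Suc Ao_def)
  finally show "Sop R (Sop R x) i = R x i" using lhs S1 by (simp add: sums_iff)
qed

lemma sqrt_exists: "\<exists>S. op_norm_tendsto (sqrt_partial R) S \<and> is_sqrt_op S R"
proof (intro exI conjI)
  show "op_norm_tendsto (sqrt_partial R) (Sop R)" by (rule S_tendsto)
  show "is_sqrt_op (Sop R) R"
    unfolding is_sqrt_op_def positive_op_def self_adjoint_op_def
    using S_op S_pos S_sa SS by blast
qed

end


lemma density_transfer:
  assumes T: "density_op T" and eq: "\<And>x. x \<in> l2 \<Longrightarrow> L x = T x"
  shows "density_op L"
proof -
  have opT: "op_on_l2 T" using T by (simp add: density_op_def)
  have "op_on_l2 L"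
    unfolding op_on_l2_def
    using op_on_l2D[OF opT] eq l2_add l2_scale by auto
  moreover have "positive_op L" using T eq by (simp add: density_op_def positive_op_def)
  moreover have "self_adjoint_op L" using T eq by (simp add: density_op_def self_adjoint_op_def)
  moreover have "(\<lambda>i. l2inner (basis_vec i) (L (basis_vec i))) sums 1"
    using T eq basis_vec_l2 by (simp add: density_op_def)
  ultimately show ?thesis by (simp add: density_op_def)
qed

lemma matop_basis: "matop M (basis_vec j) i = M i j"
proof -
  have "(\<lambda>k. M i k * basis_vec j k) = (\<lambda>k. if k = j then M i k else 0)"
    by (auto simp: basis_vec_def)
  then show ?thesis unfolding matop_def using sums_single[of j "M i"] by (simp add: sums_iff)
qed

lemma hs_bound:
  fixes d :: "nat \<Rightarrow> real" and g :: "nat \<times> nat \<Rightarrow> real"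
  assumes d0: "\<And>i. 0 \<le> d i" and ds: "d sums 1"
    and g0: "\<And>p. 0 \<le> g p" and gle: "\<And>i j. g (i,j) \<le> d i * d j"
  shows "g summable_on UNIV" "infsum g UNIV \<le> 1"
proof -
  have fb: "sum g F \<le> 1" if fin: "finite F" for F
  proof -
    define K where "K = Suc (Max (fst ` F \<union> snd ` F))"
    have sub: "F \<subseteq> {..<K} \<times> {..<K}"
    proof
      fix p assume "p \<in> F"
      then have "fst p \<le> Max (fst ` F \<union> snd ` F)" "snd p \<le> Max (fst ` F \<union> snd ` F)"
        using fin by (auto intro: Max_ge)
      then show "p \<in> {..<K} \<times> {..<K}" unfolding K_def by (cases p) auto
    qed
    have "sum g F \<le> sum g ({..<K} \<times> {..<K})" by (rule sum_mono2[OF _ sub]) (auto intro: g0)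
    also have "\<dots> \<le> sum (\<lambda>(i,j). d i * d j) ({..<K} \<times> {..<K})"
      by (rule sum_mono) (auto intro: gle)
    also have "\<dots> = (\<Sum>i<K. d i) * (\<Sum>j<K. d j)"
      by (simp add: sum_product sum.cartesian_product)
    also have "\<dots> \<le> 1 * 1"
    proof -
      have "(\<Sum>i<K. d i) \<le> 1"
        using sum_le_suminf[OF sums_summable[OF ds], of "{..<K}"] d0 sums_unique[OF ds] by simp
      then show ?thesis by (intro mult_mono) (auto intro: sum_nonneg d0)
    qed
    finally show ?thesis by simp
  qed
  show gs: "g summable_on UNIV"
    by (rule nonneg_bdd_above_summable_on) (auto intro: g0 fb bdd_aboveI2)
  show "infsum g UNIV \<le> 1" by (rule infsum_le_finite_sums[OF gs fb])
qed

theorem theorem2p2: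
  fixes M :: "nat \<Rightarrow> nat \<Rightarrow> complex"
  shows "represents_state M \<longleftrightarrow>
    ((\<lambda>(i, j). (cmod (M i j))\<^sup>2) summable_on UNIV
       \<and> (\<Sum>\<^sub>\<infinity>(i, j). (cmod (M i j))\<^sup>2) \<le> 1)
    \<and> (\<forall>i j. M i j = cnj (M j i))
    \<and> (\<exists>S. op_norm_tendsto (sqrt_partial (matop M)) S \<and> is_sqrt_op S (matop M))
    \<and> (\<lambda>i. M i i) sums 1"
proof
  assume "represents_state M"
  then obtain T where T: "density_op T" and TM: "\<And>i j. l2inner (basis_vec i) (T (basis_vec j)) = M i j"
    unfolding represents_state_def by blast
  have opT: "op_on_l2 T" using T by (simp add: density_op_def)
  have Tl2: "x \<in> l2 \<Longrightarrow> T x \<in> l2" for x using op_on_l2D(1)[OF opT] .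
  have Tsa: "x \<in> l2 \<Longrightarrow> y \<in> l2 \<Longrightarrow> l2inner x (T y) = l2inner (T x) y" for x y
    using T by (simp add: density_op_def self_adjoint_op_def)
  have Me: "T (basis_vec j) i = M i j" for i j using TM[of i j] by (simp add: basis_inner)
  have herm: "M i j = cnj (M j i)" for i j
  proof -
    have "M i j = l2inner (T (basis_vec i)) (basis_vec j)"
      using TM[of i j] Tsa[OF basis_vec_l2 basis_vec_l2, of i j] by simp
    also have "\<dots> = cnj (M j i)" by (simp add: inner_basis Tl2 basis_vec_l2 Me)
    finally show ?thesis .
  qed
  have tr: "(\<lambda>i. M i i) sums 1" using T TM by (simp add: density_op_def)
  have agree: "matop M x = T x" if x: "x \<in> l2" for x
  proof
    fix i
    have "T x i = l2inner (basis_vec i) (T x)" by (simp add: basis_inner)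
    also have "\<dots> = l2inner (T (basis_vec i)) x" by (rule Tsa[OF basis_vec_l2 x])
    also have "\<dots> = matop M x i"
    proof -
      have c: "cnj (M k i) = M i k" for k using herm[of i k] by (metis complex_cnj_cnj)
      show ?thesis unfolding l2inner_def matop_def Me c ..
    qed
    finally show "matop M x i = T x i" by simp
  qed
  have dm: "density_op (matop M)" by (rule density_transfer[OF T agree])
  have sq: "\<exists>S. op_norm_tendsto (sqrt_partial (matop M)) S \<and> is_sqrt_op S (matop M)"
    by (rule sqrt_exists[OF dm])
  define d where "d = (\<lambda>i. Re (l2inner (basis_vec i) (T (basis_vec i))))"
  have d0: "0 \<le> d i" for i
    unfolding d_def by (rule R_pos(2)[OF T basis_vec_l2])
  have ds: "d sums 1" unfolding d_def by (rule trace_re[OF T])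
  have gle: "(\<lambda>(i,j). (cmod (M i j))\<^sup>2) (i,j) \<le> d i * d j" for i j
    using R_CS[OF T basis_vec_l2 basis_vec_l2, of j i] R_CS[OF T basis_vec_l2 basis_vec_l2, of i j] TM[of i j]
    by (simp add: d_def mult.commute)
  have hs: "(\<lambda>(i, j). (cmod (M i j))\<^sup>2) summable_on UNIV"
      "(\<Sum>\<^sub>\<infinity>(i, j). (cmod (M i j))\<^sup>2) \<le> 1"
    using hs_bound[OF d0 ds _ gle] by auto
  show "((\<lambda>(i, j). (cmod (M i j))\<^sup>2) summable_on UNIV
       \<and> (\<Sum>\<^sub>\<infinity>(i, j). (cmod (M i j))\<^sup>2) \<le> 1)
    \<and> (\<forall>i j. M i j = cnj (M j i))
    \<and> (\<exists>S. op_norm_tendsto (sqrt_partial (matop M)) S \<and> is_sqrt_op S (matop M))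
    \<and> (\<lambda>i. M i i) sums 1"
    using hs herm sq tr by blast
next
  assume asm: "((\<lambda>(i, j). (cmod (M i j))\<^sup>2) summable_on UNIV
       \<and> (\<Sum>\<^sub>\<infinity>(i, j). (cmod (M i j))\<^sup>2) \<le> 1)
    \<and> (\<forall>i j. M i j = cnj (M j i))
    \<and> (\<exists>S. op_norm_tendsto (sqrt_partial (matop M)) S \<and> is_sqrt_op S (matop M))
    \<and> (\<lambda>i. M i i) sums 1"
  then obtain S where S: "is_sqrt_op S (matop M)" and tr: "(\<lambda>i. M i i) sums 1" by blast
  have opS: "op_on_l2 S" and Ssa: "\<And>x y. x \<in> l2 \<Longrightarrow> y \<in> l2 \<Longrightarrow> l2inner x (S y) = l2inner (S x) y"
    and SS: "\<And>x. x \<in> l2 \<Longrightarrow> S (S x) = matop M x"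
    using S by (auto simp: is_sqrt_op_def self_adjoint_op_def)
  note Sd = op_on_l2D[OF opS]
  have "op_on_l2 (matop M)"
    unfolding op_on_l2_def
  proof (intro conjI ballI allI)
    fix x assume x: "x \<in> l2"
    show "matop M x \<in> l2" using SS[OF x] Sd(1)[OF Sd(1)[OF x]] by simp
    fix c show "matop M (\<lambda>i. c * x i) = (\<lambda>i. c * matop M x i)"
      using SS[OF x] SS[OF l2_scale[OF x]] Sd(3)[OF x] Sd(3)[OF Sd(1)[OF x]] by simp
  next
    fix x y assume x: "x \<in> l2" and y: "y \<in> l2"
    show "matop M (\<lambda>i. x i + y i) = (\<lambda>i. matop M x i + matop M y i)"
      using SS[OF x] SS[OF y] SS[OF l2_add[OF x y]] Sd(2)[OF x y] Sd(2)[OF Sd(1)[OF x] Sd(1)[OF y]]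
      by simp
  qed
  moreover have "positive_op (matop M)"
    unfolding positive_op_def
  proof (intro ballI conjI)
    fix x assume x: "x \<in> l2"
    have "l2inner x (matop M x) = l2inner (S x) (S x)"
      using SS[OF x] Ssa[OF x Sd(1)[OF x]] by simp
    also have "\<dots> = complex_of_real ((l2norm (S x))\<^sup>2)" by (rule l2inner_self[OF Sd(1)[OF x]])
    finally have e: "l2inner x (matop M x) = complex_of_real ((l2norm (S x))\<^sup>2)" .
    show "Im (l2inner x (matop M x)) = 0" "0 \<le> Re (l2inner x (matop M x))" unfolding e by simp_all
  qed
  moreover have "self_adjoint_op (matop M)"
    unfolding self_adjoint_op_def
  proof (intro ballI)
    fix x y assume x: "x \<in> l2" and y: "y \<in> l2"
    have "l2inner x (matop M y) = l2inner (S x) (S y)" using SS[OF y] Ssa[OF x Sd(1)[OF y]] by simp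
    also have "\<dots> = l2inner (matop M x) y" using SS[OF x] Ssa[OF Sd(1)[OF x] y] by simp
    finally show "l2inner x (matop M y) = l2inner (matop M x) y" .
  qed
  moreover have "(\<lambda>i. l2inner (basis_vec i) (matop M (basis_vec i))) sums 1"
    using tr by (simp add: basis_inner matop_basis)
  ultimately have "density_op (matop M)" by (simp add: density_op_def)
  then show "represents_state M"
    unfolding represents_state_def by (auto simp: basis_inner matop_basis)
qed

end
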